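(* Let $(V,\mathrm d)$ and $(V_h,\mathrm d_h)$ be the domain complexes of closed Hilbert complexes $(W,\mathrm d)$ and $(W_h,\mathrm d_h)$ respectively, with morphisms $i_h\colon V_h\to V$ and $\pi_h\colon V\to V_h$ such that $\pi_h^k\circ i_h^k=\mathrm{id}_{V_h^k}$ for each $k$. Let $c_P$ be a constant such that $\|v\|_V\le c_P\|\mathrm d^kv\|_V$ for all $v\in(\mathfrak Z^k)^{\perp}$. Then \[\|v_h\|_{V_h}\le c_P\,\|\pi_h^k\|\,\|i_h^{k+1}\|\,\|\mathrm d_hv_h\|_h\quad\text{for all } v_h\in(\mathfrak Z_h^k)^{\perp},\] where $\|\cdot\|_h$ is the norm of $W_h^{k+1}$.
   Context: A Hilbert complex $(W,\mathrm d)$ is a sequence of Hilbert spaces $W^k$ with closed densely defined linear maps $\mathrm d^k\colon V^k\subset W^k\to V^{k+1}\subset W^{k+1}$ satisfying $\mathrm d^k\circ\mathrm d^{k-1}=0$; it is closed if each $\mathrm d^kV^k$ is closed in $W^{k+1}$. Its domain complex $(V,\mathrm d)$ consists of the domains $V^k$ with the graph inner product $\langle u,v\rangle_V=\langle u,v\rangle_{W}+\langle\mathrm d u,\mathrm d v\rangle_{W}$, and is a bounded Hilbert complex. A morphism $f\colon V\to V'$ of domain complexes is a sequence of bounded linear maps $f^k\colon V^k\to V'^k$ with $\mathrm d'^kf^k=f^{k+1}\mathrm d^k$. $\mathfrak Z^k=\ker\mathrm d^k$ and $\mathfrak Z_h^k=\ker\mathrm d_h^k$, with orthogonal complements taken in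 $V^k$ and $V_h^k$ respectively. Operator norms $\|\pi_h^k\|$, $\|i_h^{k+1}\|$ are with respect to the $V$ and $V_h$ norms. *)

theory Defs
  imports "HOL-Analysis.Analysis"
begin

text \<open>A Hilbert complex is modelled by a family of closed subspaces W k of an ambient
real Hilbert space (type 'a), dense subspaces V k of W k (the domains) and maps
d k defined on V k with values in V (Suc k).\<close>

definition hilbert_complex ::
  "(nat \<Rightarrow> 'a::{real_inner,complete_space} set) \<Rightarrow> (nat \<Rightarrow> 'a set) \<Rightarrow> (nat \<Rightarrow> 'a \<Rightarrow> 'a) \<Rightarrow> bool" where
  "hilbert_complex W V d \<longleftrightarrow> (\<forall>k.
      subspace (W k) \<and> closed (W k) \<and>
      subspace (V k) \<and> V k \<subseteq> W k \<and> W k \<subseteq> closure (V k) \<and>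
      (\<forall>x\<in>V k. d k x \<in> V (Suc k)) \<and>
      (\<forall>x\<in>V k. \<forall>y\<in>V k. d k (x + y) = d k x + d k y) \<and>
      (\<forall>c. \<forall>x\<in>V k. d k (c *\<^sub>R x) = c *\<^sub>R d k x) \<and>
      closed {(x, d k x) | x. x \<in> V k} \<and>
      (\<forall>x\<in>V k. d (Suc k) (d k x) = 0))"

definition closed_hilbert_complex ::
  "(nat \<Rightarrow> 'a::{real_inner,complete_space} set) \<Rightarrow> (nat \<Rightarrow> 'a set) \<Rightarrow> (nat \<Rightarrow> 'a \<Rightarrow> 'a) \<Rightarrow> bool" where
  "closed_hilbert_complex W V d \<longleftrightarrow> hilbert_complex W V d \<and> (\<forall>k. closed (d k ` V k))"

definition V_inner :: "(nat \<Rightarrow> 'a::real_inner \<Rightarrow> 'a) \<Rightarrow> nat \<Rightarrow> 'a \<Rightarrow> 'a \<Rightarrow> real" where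
  "V_inner d k u v = inner u v + inner (d k u) (d k v)"

definition V_norm :: "(nat \<Rightarrow> 'a::real_inner \<Rightarrow> 'a) \<Rightarrow> nat \<Rightarrow> 'a \<Rightarrow> real" where
  "V_norm d k v = sqrt (V_inner d k v v)"

definition ker_d :: "(nat \<Rightarrow> 'a::real_inner set) \<Rightarrow> (nat \<Rightarrow> 'a \<Rightarrow> 'a) \<Rightarrow> nat \<Rightarrow> 'a set" where
  "ker_d V d k = {v \<in> V k. d k v = 0}"

definition V_perp :: "(nat \<Rightarrow> 'a::real_inner set) \<Rightarrow> (nat \<Rightarrow> 'a \<Rightarrow> 'a) \<Rightarrow> nat \<Rightarrow> 'a set \<Rightarrow> 'a set" where
  "V_perp V d k S = {v \<in> V k. \<forall>z\<in>S. V_inner d k v z = 0}"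

definition domain_morphism ::
  "(nat \<Rightarrow> 'a::real_inner set) \<Rightarrow> (nat \<Rightarrow> 'a \<Rightarrow> 'a) \<Rightarrow>
   (nat \<Rightarrow> 'b::real_inner set) \<Rightarrow> (nat \<Rightarrow> 'b \<Rightarrow> 'b) \<Rightarrow> (nat \<Rightarrow> 'a \<Rightarrow> 'b) \<Rightarrow> bool" where
  "domain_morphism V d V' d' f \<longleftrightarrow> (\<forall>k.
      (\<forall>x\<in>V k. f k x \<in> V' k) \<and>
      (\<forall>x\<in>V k. \<forall>y\<in>V k. f k (x + y) = f k x + f k y) \<and>
      (\<forall>c. \<forall>x\<in>V k. f k (c *\<^sub>R x) = c *\<^sub>R f k x) \<and>
      (\<exists>C. \<forall>x\<in>V k. V_norm d' k (f k x) \<le> C * V_norm d k x) \<and>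
      (\<forall>x\<in>V k. d' k (f k x) = f (Suc k) (d k x)))"

definition op_norm ::
  "(nat \<Rightarrow> 'a::real_inner set) \<Rightarrow> (nat \<Rightarrow> 'a \<Rightarrow> 'a) \<Rightarrow>
   (nat \<Rightarrow> 'b::real_inner \<Rightarrow> 'b) \<Rightarrow> (nat \<Rightarrow> 'a \<Rightarrow> 'b) \<Rightarrow> nat \<Rightarrow> real" where
  "op_norm V d d' f k = Inf {C. C \<ge> 0 \<and> (\<forall>x\<in>V k. V_norm d' k (f k x) \<le> C * V_norm d k x)}"

end

theory Submission
  imports Defs
begin

lemma min_norm_exists:
  fixes S :: "'c::{real_inner,complete_space} set"
  assumes cl: "closed S" and cv: "convex S" and ne: "S \<noteq> {}"
  shows "\<exists>x\<in>S. \<forall>y\<in>S. norm x \<le> norm y"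
proof -
  define \<delta> where "\<delta> = Inf (norm ` S)"
  have bdd: "bdd_below (norm ` S)" by (rule bdd_belowI[of _ 0]) auto
  have dlow: "\<delta> \<le> norm y" if "y \<in> S" for y
    unfolding \<delta>_def using bdd that by (simp add: cInf_lower)
  have d0: "0 \<le> \<delta>" unfolding \<delta>_def using ne by (auto intro: cInf_greatest)
  have "\<forall>n. \<exists>x\<in>S. norm x < \<delta> + 1 / (real n + 1)"
  proof
    fix n :: nat
    have "Inf (norm ` S) < \<delta> + 1 / (real n + 1)" unfolding \<delta>_def by simp
    then obtain t where "t \<in> norm ` S" "t < \<delta> + 1 / (real n + 1)"
      using cInf_lessD[of "norm ` S"] ne by blast
    then show "\<exists>x\<in>S. norm x < \<delta> + 1 / (real n + 1)" by auto
  qed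
  then obtain x where xS: "\<And>n. x n \<in> S" and xn: "\<And>n. norm (x n) < \<delta> + 1 / (real n + 1)"
    by metis
  have mid: "2 * \<delta> \<le> norm (x n + x m)" for n m
  proof -
    have "(1/2) *\<^sub>R x n + (1/2) *\<^sub>R x m \<in> S"
      using cv xS unfolding convex_def by (metis (no_types) add_divide_distrib divide_self_if zero_le_divide_iff zero_le_one zero_le_numeral one_add_one zero_neq_numeral)
    then have "\<delta> \<le> norm ((1/2) *\<^sub>R (x n + x m))" using dlow by (simp add: scaleR_right_distrib)
    then show ?thesis by simp
  qed
  have key: "(norm (x n - x m))\<^sup>2 \<le> (8*\<delta>+4) * e" if "e \<le> 1" "1/(real n+1) \<le> e" "1/(real m+1) \<le> e" for n m e
  proof -
    have par: "(norm (x n - x m))\<^sup>2 = 2*(norm (x n))\<^sup>2 + 2*(norm (x m))\<^sup>2 - (norm (x n + x m))\<^sup>2"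
      by (simp add: power2_norm_eq_inner inner_diff_left inner_diff_right inner_add_left inner_add_right inner_commute)
    have a: "norm (x n) \<le> \<delta> + e" using xn[of n] that by linarith
    have b: "norm (x m) \<le> \<delta> + e" using xn[of m] that by linarith
    have a2: "(norm (x n))\<^sup>2 \<le> (\<delta> + e)\<^sup>2" using a by (simp add: power_mono)
    have b2: "(norm (x m))\<^sup>2 \<le> (\<delta> + e)\<^sup>2" using b by (simp add: power_mono)
    have c2: "(2*\<delta>)\<^sup>2 \<le> (norm (x n + x m))\<^sup>2" using mid[of n m] d0 by (intro power_mono) auto
    have e0: "0 \<le> e" using that(2) by (smt (verit) divide_nonneg_nonneg of_nat_0_le_iff)
    have "(norm (x n - x m))\<^sup>2 \<le> 4*(\<delta>+e)\<^sup>2 - 4*\<delta>^2" using par a2 b2 c2 by (simp add: power_mult_distrib)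
    also have "\<dots> = 8*\<delta>*e + 4*e*e" by (simp add: power2_eq_square algebra_simps)
    also have "\<dots> \<le> 8*\<delta>*e + 4*e" using e0 that(1) by (simp add: mult_left_le)
    finally show ?thesis by (simp add: algebra_simps)
  qed
  have "Cauchy x"
  proof (rule metric_CauchyI)
    fix \<epsilon> :: real assume "0 < \<epsilon>"
    define r where "r = min 1 (\<epsilon>^2 / (2*(8*\<delta>+4)))"
    have r0: "0 < r" using \<open>0 < \<epsilon>\<close> d0 unfolding r_def by auto
    obtain N where N: "inverse (real (Suc N)) < r" using reals_Archimedean[OF r0] by blast
    have "dist (x m) (x n) < \<epsilon>" if "m \<ge> N" "n \<ge> N" for m n
    proof -
      have le: "1/(real k+1) \<le> r" if "k \<ge> N" for k
      proof -
        have "1/(real k+1) \<le> 1/(real N + 1)" using that by (simp add: frac_le)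
        then show ?thesis using N by (simp add: inverse_eq_divide add.commute)
      qed
      have "(norm (x m - x n))\<^sup>2 \<le> (8*\<delta>+4) * r" using key[of r m n] le that r_def by auto
      also have "\<dots> \<le> (8*\<delta>+4) * (\<epsilon>^2 / (2*(8*\<delta>+4)))" using d0 unfolding r_def
        by (intro mult_left_mono) auto
      also have "\<dots> = \<epsilon>^2/2" using d0 by (simp add: field_simps)
      also have "\<dots> < \<epsilon>^2" using \<open>0 < \<epsilon>\<close> by simp
      finally have "(norm (x m - x n))\<^sup>2 < \<epsilon>^2" by simp
      then show ?thesis using \<open>0 < \<epsilon>\<close> by (simp add: dist_norm power_less_imp_less_base)
    qed
    then show "\<exists>M. \<forall>m\<ge>M. \<forall>n\<ge>M. dist (x m) (x n) < \<epsilon>" by blast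
  qed
  then obtain l where l: "x \<longlonglongrightarrow> l" using Cauchy_convergent_iff convergent_def by blast
  have lS: "l \<in> S" using closed_sequentially[OF cl] xS l by blast
  have "(\<lambda>n. norm (x n)) \<longlonglongrightarrow> norm l" using l by (rule tendsto_norm)
  moreover have "(\<lambda>n. \<delta> + 1 / (real n + 1)) \<longlonglongrightarrow> \<delta> + 0"
    using LIMSEQ_inverse_real_of_nat by (intro tendsto_add tendsto_const) (simp add: inverse_eq_divide add.commute)
  ultimately have "norm l \<le> \<delta> + 0" using xn by (intro LIMSEQ_le) (auto intro: less_imp_le)
  then show ?thesis using lS dlow by force
qed

lemma V_norm_pair: "V_norm d k v = norm (v, d k v)"
  unfolding V_norm_def V_inner_def by (simp add: norm_Pair power2_norm_eq_inner)

lemma V_norm_nonneg: "0 \<le> V_norm d k v"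
  by (simp add: V_norm_pair)

lemma op_norm_bound:
  assumes "domain_morphism V d V' d' f" "x \<in> V k"
  shows "V_norm d' k (f k x) \<le> op_norm V d d' f k * V_norm d k x"
    and "0 \<le> op_norm V d d' f k"
proof -
  let ?S = "{C. C \<ge> 0 \<and> (\<forall>x\<in>V k. V_norm d' k (f k x) \<le> C * V_norm d k x)}"
  obtain C where C: "\<forall>x\<in>V k. V_norm d' k (f k x) \<le> C * V_norm d k x"
    using assms(1) unfolding domain_morphism_def by blast
  have "max C 0 \<in> ?S"
  proof -
    have "C * V_norm d k x \<le> max C 0 * V_norm d k x" for x
      by (intro mult_right_mono) (auto simp: V_norm_nonneg)
    then show ?thesis using C by (auto intro: order_trans)
  qed
  then have ne: "?S \<noteq> {}" by blast
  show "0 \<le> op_norm V d d' f k" unfolding op_norm_def using ne by (auto intro: cInf_greatest)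
  show "V_norm d' k (f k x) \<le> op_norm V d d' f k * V_norm d k x"
  proof (cases "V_norm d k x = 0")
    case True
    then show ?thesis using \<open>max C 0 \<in> ?S\<close> assms(2) by auto
  next
    case False
    then have pos: "0 < V_norm d k x" using V_norm_nonneg[of d k x] by linarith
    have "V_norm d' k (f k x) / V_norm d k x \<le> op_norm V d d' f k"
      unfolding op_norm_def
    proof (rule cInf_greatest[OF ne])
      fix c assume "c \<in> ?S"
      then show "V_norm d' k (f k x) / V_norm d k x \<le> c" using assms(2) pos
        by (auto simp: divide_le_eq)
    qed
    then show ?thesis using pos by (simp add: divide_le_eq)
  qed
qed

lemma perp_variational:
  fixes p w :: "'c::real_inner"
  assumes "\<And>t. norm p \<le> norm (p + t *\<^sub>R w)"
  shows "inner p w = 0"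
proof -
  define a where "a = inner p w"
  define b where "b = inner w w"
  have b0: "0 \<le> b" unfolding b_def by simp
  have "(norm p)^2 \<le> (norm (p + t *\<^sub>R w))^2" for t
    using assms[of t] by (simp add: power_mono)
  then have "0 \<le> 2*t*a + t*t*b" for t
    by (simp add: power2_norm_eq_inner inner_add_left inner_add_right inner_commute a_def b_def algebra_simps)
  note h = this
  have c0: "b + 1 > 0" using b0 by linarith
  define t where "t = - a/(b+1)"
  have tc: "t*(b+1) = -a" using c0 unfolding t_def by simp
  have eq: "(b+1)*(b+1)*(2*t*a + t*t*b) = 2*a*(t*(b+1))*(b+1) + (t*(b+1))*(t*(b+1))*b"
    by algebra
  also have "\<dots> = a*a*(-b-2)" unfolding tc by algebra
  finally have eq: "(b+1)*(b+1)*(2*t*a + t*t*b) = a*a*(-b-2)" .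
  have "0 \<le> (b+1)*(b+1)*(2*t*a + t*t*b)"
    using h[of t] c0 by (intro mult_nonneg_nonneg) auto
  then have "0 \<le> a*a*(-b-2)" using eq by simp
  then have "a*a*(b+2) \<le> 0" by (simp add: algebra_simps)
  moreover have "b + 2 > 0" using b0 by linarith
  ultimately have "a*a \<le> 0" by (simp add: mult_le_0_iff)
  then have "a = 0" by (auto simp add: mult_le_0_iff)
  then show ?thesis unfolding a_def .
qed


lemma pyth_le:
  fixes x y :: "'c::real_inner"
  assumes "inner x y = 0"
  shows "norm x \<le> norm (x + y)"
proof -
  have "(norm (x+y))^2 = (norm x)^2 + (norm y)^2"
    using assms by (simp add: power2_norm_eq_inner inner_add_left inner_add_right inner_commute)
  then have "(norm x)^2 \<le> (norm (x+y))^2" by simp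
  then show ?thesis by (simp add: power2_le_iff_abs_le)
qed

theorem mainTheorem5:
  fixes W V :: "nat \<Rightarrow> 'a::{real_inner,complete_space} set"
    and d :: "nat \<Rightarrow> 'a \<Rightarrow> 'a"
    and Wh Vh :: "nat \<Rightarrow> 'b::{real_inner,complete_space} set"
    and dh :: "nat \<Rightarrow> 'b \<Rightarrow> 'b"
    and ih :: "nat \<Rightarrow> 'b \<Rightarrow> 'a"
    and \<pi>h :: "nat \<Rightarrow> 'a \<Rightarrow> 'b"
    and k :: nat and cP :: real
  assumes "closed_hilbert_complex W V d"
    and "closed_hilbert_complex Wh Vh dh"
    and "domain_morphism Vh dh V d ih"
    and "domain_morphism V d Vh dh \<pi>h"
    and "\<forall>j. \<forall>x\<in>Vh j. \<pi>h j (ih j x) = x"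
    and "\<forall>v\<in>V_perp V d k (ker_d V d k). V_norm d k v \<le> cP * V_norm d (Suc k) (d k v)"
  shows "\<forall>vh\<in>V_perp Vh dh k (ker_d Vh dh k).
           V_norm dh k vh \<le> cP * op_norm V d dh \<pi>h k * op_norm Vh dh d ih (Suc k) * norm (dh k vh)"
proof (intro ballI)
  fix vh assume vh: "vh \<in> V_perp Vh dh k (ker_d Vh dh k)"
  have HC: "hilbert_complex W V d" using assms(1) by (simp add: closed_hilbert_complex_def)
  have HCh: "hilbert_complex Wh Vh dh" using assms(2) by (simp add: closed_hilbert_complex_def)
  have Vsub: "subspace (V j)" for j using HC unfolding hilbert_complex_def by blast
  have Vhsub: "subspace (Vh j)" for j using HCh unfolding hilbert_complex_def by blast
  have dadd: "\<And>x y. x \<in> V k \<Longrightarrow> y \<in> V k \<Longrightarrow> d k (x + y) = d k x + d k y"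
    using HC unfolding hilbert_complex_def by blast
  have dscale: "\<And>c x. x \<in> V k \<Longrightarrow> d k (c *\<^sub>R x) = c *\<^sub>R d k x"
    using HC unfolding hilbert_complex_def by blast
  have gclosed: "closed {(x, d k x) | x. x \<in> V k}"
    using HC unfolding hilbert_complex_def by blast
  have dhadd: "\<And>x y. x \<in> Vh k \<Longrightarrow> y \<in> Vh k \<Longrightarrow> dh k (x + y) = dh k x + dh k y"
    using HCh unfolding hilbert_complex_def by blast
  have dhin: "\<And>x. x \<in> Vh k \<Longrightarrow> dh k x \<in> Vh (Suc k)"
    using HCh unfolding hilbert_complex_def by blast
  have dhdh: "\<And>x. x \<in> Vh k \<Longrightarrow> dh (Suc k) (dh k x) = 0"
    using HCh unfolding hilbert_complex_def by blast
  have ihin: "\<And>j x. x \<in> Vh j \<Longrightarrow> ih j x \<in> V j"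
    using assms(3) unfolding domain_morphism_def by blast
  have ihcomm: "\<And>j x. x \<in> Vh j \<Longrightarrow> d j (ih j x) = ih (Suc j) (dh j x)"
    using assms(3) unfolding domain_morphism_def by blast
  have piin: "\<And>j x. x \<in> V j \<Longrightarrow> \<pi>h j x \<in> Vh j"
    using assms(4) unfolding domain_morphism_def by blast
  have piscale: "\<And>j c x. x \<in> V j \<Longrightarrow> \<pi>h j (c *\<^sub>R x) = c *\<^sub>R \<pi>h j x"
    using assms(4) unfolding domain_morphism_def by blast
  have picomm: "\<And>j x. x \<in> V j \<Longrightarrow> dh j (\<pi>h j x) = \<pi>h (Suc j) (d j x)"
    using assms(4) unfolding domain_morphism_def by blast
  have vhV: "vh \<in> Vh k" and vhperp: "\<And>z. z \<in> ker_d Vh dh k \<Longrightarrow> V_inner dh k vh z = 0"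
    using vh unfolding V_perp_def by auto
  define u where "u = ih k vh"
  have uV: "u \<in> V k" using ihin vhV unfolding u_def by blast
  define A where "A = {(v, d k v) | v. v \<in> V k \<and> d k v = d k u}"
  have A_eq: "A = {(x, d k x) | x. x \<in> V k} \<inter> (UNIV \<times> {d k u})" unfolding A_def by auto
  have Acl: "closed A" unfolding A_eq by (intro closed_Int gclosed closed_Times) auto
  have Acv: "convex A"
  proof (rule convexI)
    fix x y and a b :: real assume xA: "x \<in> A" and yA: "y \<in> A" and "0 \<le> a" "0 \<le> b" "a + b = 1"
    then have ab: "0 \<le> a \<and> 0 \<le> b \<and> a + b = 1" by simp
    obtain v1 where v1: "x = (v1, d k v1)" "v1 \<in> V k" "d k v1 = d k u" using xA unfolding A_def by blast
    obtain v2 where v2: "y = (v2, d k v2)" "v2 \<in> V k" "d k v2 = d k u" using yA unfolding A_def by blast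
    have in1: "a *\<^sub>R v1 \<in> V k" "b *\<^sub>R v2 \<in> V k" using v1 v2 Vsub by (auto intro: subspace_scale)
    have lin: "d k (a *\<^sub>R v1 + b *\<^sub>R v2) = a *\<^sub>R d k v1 + b *\<^sub>R d k v2"
      using dadd[OF in1] dscale v1 v2 by simp
    also have "\<dots> = d k u" using v1 v2 ab by (simp add: scaleR_left_distrib[symmetric])
    finally have "d k (a *\<^sub>R v1 + b *\<^sub>R v2) = d k u" .
    moreover have "a *\<^sub>R v1 + b *\<^sub>R v2 \<in> V k" using in1 Vsub by (auto intro: subspace_add)
    moreover have "a *\<^sub>R x + b *\<^sub>R y = (a *\<^sub>R v1 + b *\<^sub>R v2, a *\<^sub>R d k v1 + b *\<^sub>R d k v2)"
      using v1 v2 by simp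
    ultimately show "a *\<^sub>R x + b *\<^sub>R y \<in> A" unfolding A_def using lin
      by auto
  qed
  have Ane: "A \<noteq> {}" using uV unfolding A_def by blast
  obtain p where pA: "p \<in> A" and pmin: "\<And>y. y \<in> A \<Longrightarrow> norm p \<le> norm y"
    using min_norm_exists[OF Acl Acv Ane] by blast
  obtain m where pm: "p = (m, d k m)" and mV: "m \<in> V k" and dm_u: "d k m = d k u"
    using pA unfolding A_def by blast
  have mperp: "m \<in> V_perp V d k (ker_d V d k)"
    unfolding V_perp_def
  proof (intro CollectI conjI ballI mV)
    fix z assume "z \<in> ker_d V d k"
    then have zV: "z \<in> V k" and dz: "d k z = 0" unfolding ker_d_def by auto
    have "norm p \<le> norm (p + t *\<^sub>R (z, 0))" for t
    proof -
      have tz: "t *\<^sub>R z \<in> V k" using zV Vsub by (auto intro: subspace_scale)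
      have "d k (m + t *\<^sub>R z) = d k m" using dadd[OF mV tz] dscale[OF zV] dz by simp
      moreover have "m + t *\<^sub>R z \<in> V k" using mV tz Vsub by (auto intro: subspace_add)
      ultimately have "(m + t *\<^sub>R z, d k (m + t *\<^sub>R z)) \<in> A" unfolding A_def using dm_u by auto
      moreover have "p + t *\<^sub>R (z, 0) = (m + t *\<^sub>R z, d k (m + t *\<^sub>R z))"
        using pm \<open>d k (m + t *\<^sub>R z) = d k m\<close> by simp
      ultimately show ?thesis using pmin by simp
    qed
    then have "inner p (z, 0) = 0" by (rule perp_variational)
    then show "V_inner d k m z = 0" using pm dz unfolding V_inner_def by simp
  qed
  define w where "w = \<pi>h k m"
  define y where "y = dh k vh"
  have wV: "w \<in> Vh k" using piin mV unfolding w_def by blast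
  have yV: "y \<in> Vh (Suc k)" using dhin vhV unfolding y_def by blast
  have dm: "d k m = ih (Suc k) y" using dm_u ihcomm[OF vhV] unfolding u_def y_def by simp
  have dhw: "dh k w = y"
    using picomm[OF mV] dm assms(5) yV unfolding w_def by simp
  have wvV: "w - vh \<in> Vh k" using wV vhV Vhsub by (auto intro: subspace_diff)
  have "dh k w = dh k (vh + (w - vh))" by simp
  also have "\<dots> = dh k vh + dh k (w - vh)" using dhadd[OF vhV wvV] .
  finally have "dh k (w - vh) = 0" using dhw unfolding y_def by simp
  then have "w - vh \<in> ker_d Vh dh k" using wvV unfolding ker_d_def by simp
  then have orth: "V_inner dh k vh (w - vh) = 0" by (rule vhperp)
  have "(w, dh k w) = (vh, dh k vh) + (w - vh, dh k (w - vh))"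
    using \<open>dh k (w - vh) = 0\<close> dhw unfolding y_def by simp
  moreover have "inner (vh, dh k vh) (w - vh, dh k (w - vh)) = 0"
    using orth unfolding V_inner_def by simp
  ultimately have s0: "V_norm dh k vh \<le> V_norm dh k w"
    unfolding V_norm_pair by (metis pyth_le)
  define Pi where "Pi = op_norm V d dh \<pi>h k"
  define I where "I = op_norm Vh dh d ih (Suc k)"
  have s1: "V_norm dh k w \<le> Pi * V_norm d k m" and Pi0: "0 \<le> Pi"
    using op_norm_bound[OF assms(4) mV] unfolding w_def Pi_def by auto
  have s2: "V_norm d k m \<le> cP * V_norm d (Suc k) (ih (Suc k) y)"
    using bspec[OF assms(6) mperp] dm by simp
  have s3: "V_norm d (Suc k) (ih (Suc k) y) \<le> I * V_norm dh (Suc k) y" and I0: "0 \<le> I"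
    using op_norm_bound[OF assms(3) yV] unfolding I_def by auto
  have s4: "V_norm dh (Suc k) y = norm y"
    using dhdh[OF vhV] unfolding y_def V_norm_pair by (simp add: norm_Pair)
  show "V_norm dh k vh \<le> cP * op_norm V d dh \<pi>h k * op_norm Vh dh d ih (Suc k) * norm (dh k vh)"
  proof (cases "0 \<le> cP")
    case True
    have "V_norm dh k vh \<le> Pi * V_norm d k m" using s0 s1 by linarith
    also have "\<dots> \<le> Pi * (cP * V_norm d (Suc k) (ih (Suc k) y))" using s2 Pi0 by (rule mult_left_mono)
    also have "\<dots> \<le> Pi * (cP * (I * norm y))" using s3 s4 Pi0 True
      by (intro mult_left_mono) auto
    finally show ?thesis by (simp add: Pi_def I_def y_def algebra_simps)
  next
    case False
    define X where "X = V_norm d (Suc k) (ih (Suc k) y)"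
    have X0: "0 \<le> X" unfolding X_def by (rule V_norm_nonneg)
    have "cP * X \<le> 0" using False X0 by (simp add: mult_nonpos_nonneg)
    moreover have "0 \<le> cP * X" using s2 V_norm_nonneg[of d k m] unfolding X_def by linarith
    ultimately have "cP * X = 0" by linarith
    then have "X = 0" using False by simp
    then have "ih (Suc k) y = 0" unfolding X_def V_norm_pair by (simp add: norm_Pair)
    then have "y = \<pi>h (Suc k) 0" using assms(5) yV by metis
    also have "\<dots> = \<pi>h (Suc k) (0 *\<^sub>R 0)" by simp
    also have "\<dots> = 0" using piscale[of 0 "Suc k" 0] Vsub[of "Suc k"] by (simp add: subspace_0)
    finally have y0: "y = 0" .
    have "V_norm d k m \<le> 0" using s2 \<open>X = 0\<close> unfolding X_def by simp
    then have "V_norm dh k vh \<le> 0" using s0 s1 Pi0 by (smt (verit) mult_nonneg_nonpos)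
    then show ?thesis using y0 by (simp add: y_def)
  qed
qed

end
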